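(* Let $w,v$ be two nodes in a syntactically homogeneous (division-free) algebraic circuit $F$ whose nodes carry syntactic-degree upper bounds $\deg'(\cdot)$, and suppose $\deg'(w)>\deg'(v)/2$. Then the polynomial $\partial_w f_v$ has degree at most $\deg'(v)-\deg'(w)$.
   Context: $F$ is a division-free algebraic circuit over $\mathbb Z$ produced by the homogenization construction in which integer leaves are treated like variables: each original node $u$ is duplicated into nodes $[u,i]$, integer and variable leaves $\ell$ give $[\ell,1]=\ell$ and $[\ell,i]=0$ for $i\ne1$, $[u,i]=[u_1,i]+[u_2,i]$ for $u=u_1+u_2$, $[u,i]=\sum_{j+l=i}[u_1,j]\times[u_2,l]$ for $u=u_1\times u_2$; the number $\deg'([u,i])=i$ is the syntactic-degree upper bound of that node (so every $+$ gate has both children with the same $\deg'$, every $\times$ gate has $\deg'$ equal to the sum of its children's, and the polynomial computed at each node has degree at most its $\deg'$). $F$ being syntactically homogeneous means $\deg'(v)=\deg'(v_1)=\deg'(v_2)$ for every $+$ gate $v=v_1+v_2$. For a node $v$, $F_v$ is the subcircuit rooted at $v$ and $f_v$ the polynomial it computes. The polynomial $\partial_wf_v$ is defined by: $0$ if $w$ is not in $F_v$; $1$ if $w=v$; otherwise $\partial_wf_{v_1}+\partial_wf_{v_2}$ if $v=v_1+v_2$; and $(\partial_wf_{v_1})\cdot f_{v_2}$ if $v=v_1\cdot v_2$ with $\deg'(v_1)\ge\deg'(v_2)$, or $v=v_2\cdot v_1$ with $\deg'(v_1)>\deg'(v_2)$. *)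

theory Defs
  imports "HOL-Library.Poly_Mapping"
begin

text \<open>Multivariate integer polynomials in variables indexed by nat:
  a monomial is a finitely supported exponent vector finitely supported nat-to-nat map,
  a polynomial is a finitely supported coefficient map on monomials.\<close>
type_synonym mpoly = "(nat \<Rightarrow>\<^sub>0 nat) \<Rightarrow>\<^sub>0 int"

definition mvar :: "nat \<Rightarrow> mpoly" where
  "mvar i = Poly_Mapping.single (Poly_Mapping.single i 1) 1"

text \<open>Total degree (the zero polynomial gets degree 0).\<close>
definition tdeg :: "mpoly \<Rightarrow> nat" where
  "tdeg p = Max (insert 0 ((\<lambda>m. sum (Poly_Mapping.lookup m) (Poly_Mapping.keys m)) ` Poly_Mapping.keys p))"

datatype gate = Var nat | Cst int | Add nat nat | Mul nat nat

text \<open>Well-formed circuit on nodes 0..N-1: children of a gate have smaller index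
  (so the circuit is a finite DAG).\<close>
definition wf_circuit :: "(nat \<Rightarrow> gate) \<Rightarrow> nat \<Rightarrow> bool" where
  "wf_circuit C N \<longleftrightarrow> (\<forall>u<N. \<forall>a b. (C u = Add a b \<or> C u = Mul a b) \<longrightarrow> a < u \<and> b < u)"

function evalc :: "(nat \<Rightarrow> gate) \<Rightarrow> nat \<Rightarrow> mpoly" where
  "evalc C u = (case C u of
      Var i \<Rightarrow> mvar i
    | Cst c \<Rightarrow> of_int c
    | Add a b \<Rightarrow> (if a < u \<and> b < u then evalc C a + evalc C b else 0)
    | Mul a b \<Rightarrow> (if a < u \<and> b < u then evalc C a * evalc C b else 0))"
  by pat_completeness auto
termination by (relation "measure (\<lambda>(C,u). u)") auto

definition child :: "(nat \<Rightarrow> gate) \<Rightarrow> nat \<Rightarrow> nat \<Rightarrow> bool" where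
  "child C a u \<longleftrightarrow> (\<exists>b. C u = Add a b \<or> C u = Add b a \<or> C u = Mul a b \<or> C u = Mul b a)"

definition in_sub :: "(nat \<Rightarrow> gate) \<Rightarrow> nat \<Rightarrow> nat \<Rightarrow> bool" where
  "in_sub C w v \<longleftrightarrow> (child C)\<^sup>*\<^sup>* w v"

text \<open>The polynomial \<partial>_w f_v, relative to the degree labelling D = deg'.\<close>
function pd :: "(nat \<Rightarrow> gate) \<Rightarrow> (nat \<Rightarrow> nat) \<Rightarrow> nat \<Rightarrow> nat \<Rightarrow> mpoly" where
  "pd C D w v = (if \<not> in_sub C w v then 0 else if w = v then 1 else
     (case C v of
        Add a b \<Rightarrow> (if a < v \<and> b < v then pd C D w a + pd C D w b else 0)
      | Mul a b \<Rightarrow> (if a < v \<and> b < v then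
                     (if D a \<ge> D b then pd C D w a * evalc C b
                      else pd C D w b * evalc C a)
                   else 0)
      | _ \<Rightarrow> 0))"
  by pat_completeness auto
termination by (relation "measure (\<lambda>(C,D,w,v). v)") auto

definition deg_labelling :: "(nat \<Rightarrow> gate) \<Rightarrow> nat \<Rightarrow> (nat \<Rightarrow> nat) \<Rightarrow> bool" where
  "deg_labelling C N D \<longleftrightarrow>
     (\<forall>u<N. \<forall>a b. C u = Mul a b \<longrightarrow> D u = D a + D b) \<and>
     (\<forall>u<N. tdeg (evalc C u) \<le> D u)"

definition synt_homogeneous :: "(nat \<Rightarrow> gate) \<Rightarrow> nat \<Rightarrow> (nat \<Rightarrow> nat) \<Rightarrow> bool" where
  "synt_homogeneous C N D \<longleftrightarrow> (\<forall>u<N. \<forall>a b. C u = Add a b \<longrightarrow> D a = D u \<and> D b = D u)"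

end

theory Submission
  imports Defs
begin

definition degm :: "(nat \<Rightarrow>\<^sub>0 nat) \<Rightarrow> nat" where
  "degm m = sum (Poly_Mapping.lookup m) (Poly_Mapping.keys m)"

lemma degm_add: "degm (a + b) = degm a + degm b"
  unfolding degm_def
  using setsum_keys_plus_distrib[where f="\<lambda>k x. x" and p=a and q=b] by simp

lemma tdeg_le_iff: "tdeg p \<le> k \<longleftrightarrow> (\<forall>m\<in>Poly_Mapping.keys p. degm m \<le> k)"
  unfolding tdeg_def degm_def by (simp add: finite_keys)

lemma tdeg_le: "m \<in> Poly_Mapping.keys p \<Longrightarrow> degm m \<le> tdeg p"
  using tdeg_le_iff by blast

lemma tdeg_add: "tdeg (p + q) \<le> k" if "tdeg p \<le> k" "tdeg q \<le> k" for p q :: mpoly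
  using that keys_add[of p q] unfolding tdeg_le_iff by blast

lemma tdeg_mult: "tdeg (p * q) \<le> k + l" if "tdeg p \<le> k" "tdeg q \<le> l" for p q :: mpoly
proof -
  have "degm m \<le> k + l" if "m \<in> Poly_Mapping.keys (p * q)" for m
  proof -
    from keys_mult[of p q] that obtain a b where "m = a + b" "a \<in> Poly_Mapping.keys p" "b \<in> Poly_Mapping.keys q"
      by blast
    then show ?thesis using \<open>tdeg p \<le> k\<close> \<open>tdeg q \<le> l\<close> by (simp add: degm_add tdeg_le_iff add_mono)
  qed
  then show ?thesis by (simp add: tdeg_le_iff)
qed

lemma tdeg_one: "tdeg (1::mpoly) = 0"
  unfolding tdeg_def by simp

lemma tdeg_zero: "tdeg (0::mpoly) = 0"
  unfolding tdeg_def by simp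

lemma D_mono:
  assumes wf: "wf_circuit C N" and dl: "deg_labelling C N D" and sh: "synt_homogeneous C N D"
    and "in_sub C w v"
  shows "v < N \<Longrightarrow> D w \<le> D v"
  using assms(4) unfolding in_sub_def
proof (induction rule: rtranclp_induct)
  case base then show ?case by simp
next
  case (step y z)
  from step.hyps(2) obtain b where g: "C z = Add y b \<or> C z = Add b y \<or> C z = Mul y b \<or> C z = Mul b y"
    unfolding child_def by blast
  have "y < z" using g wf step.prems unfolding wf_circuit_def by blast
  then have "D w \<le> D y" using step by simp
  moreover have "D y \<le> D z" using g dl sh step.prems
    unfolding deg_labelling_def synt_homogeneous_def by fastforce
  ultimately show ?case by simp
qed

lemma main_gen:
  assumes wf: "wf_circuit C N" and dl: "deg_labelling C N D" and sh: "synt_homogeneous C N D"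
  shows "v < N \<Longrightarrow> tdeg (pd C D w v) \<le> D v - D w"
proof (induction v rule: less_induct)
  case (less v)
  show ?case
  proof (cases "in_sub C w v \<and> w \<noteq> v")
    case False
    then show ?thesis by (auto simp: tdeg_one tdeg_zero)
  next
    case True
    then have ins: "in_sub C w v" and ne: "w \<noteq> v" by auto
    have pd0: "pd C D w u = 0" if "\<not> in_sub C w u" for u using that by simp
    have ev: "tdeg (evalc C u) \<le> D u" if "u < N" for u using dl that unfolding deg_labelling_def by blast
    show ?thesis
    proof (cases "C v")
      case (Var x1)
      then show ?thesis using ins ne by (simp add: tdeg_zero)
    next
      case (Cst x2)
      then show ?thesis using ins ne by (simp add: tdeg_zero)
    next
      case (Add a b)
      have lt: "a < v" "b < v" using wf less.prems Add unfolding wf_circuit_def by auto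
      have Da: "D a = D v" "D b = D v" using sh less.prems Add unfolding synt_homogeneous_def by auto
      have "pd C D w v = pd C D w a + pd C D w b" using ins ne Add lt by simp
      moreover have "tdeg (pd C D w a) \<le> D v - D w" using less.IH[of a] lt less.prems Da by simp
      moreover have "tdeg (pd C D w b) \<le> D v - D w" using less.IH[of b] lt less.prems Da by simp
      ultimately show ?thesis using tdeg_add by simp
    next
      case (Mul a b)
      have lt: "a < v" "b < v" using wf less.prems Mul unfolding wf_circuit_def by auto
      have Dv: "D v = D a + D b" using dl less.prems Mul unfolding deg_labelling_def by auto
      show ?thesis
      proof (cases "D a \<ge> D b")
        case True
        have e: "pd C D w v = pd C D w a * evalc C b" using ins ne Mul lt True by simp
        show ?thesis
        proof (cases "in_sub C w a")
          case False then show ?thesis using e pd0 by (simp add: tdeg_zero)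
        next
          case True
          have "D w \<le> D a" using D_mono[OF wf dl sh True] lt less.prems by simp
          have "tdeg (pd C D w a * evalc C b) \<le> (D a - D w) + D b"
            using tdeg_mult less.IH[of a] lt less.prems ev[of b] by simp
          then show ?thesis using e Dv \<open>D w \<le> D a\<close> by simp
        qed
      next
        case False
        have e: "pd C D w v = pd C D w b * evalc C a" using ins ne Mul lt False by simp
        show ?thesis
        proof (cases "in_sub C w b")
          case False then show ?thesis using e pd0 by (simp add: tdeg_zero)
        next
          case True
          have "D w \<le> D b" using D_mono[OF wf dl sh True] lt less.prems by simp
          have "tdeg (pd C D w b * evalc C a) \<le> (D b - D w) + D a"
            using tdeg_mult less.IH[of b] lt less.prems ev[of a] by simp
          then show ?thesis using e Dv \<open>D w \<le> D b\<close> by simp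
        qed
      qed
    qed
  qed
qed

theorem mainTheorem11:
  fixes C :: "nat \<Rightarrow> gate" and N :: nat and D :: "nat \<Rightarrow> nat" and w v :: nat
  assumes "wf_circuit C N"
    and "deg_labelling C N D"
    and "synt_homogeneous C N D"
    and "w < N" and "v < N"
    and "2 * D w > D v"
  shows "tdeg (pd C D w v) \<le> D v - D w"
  using main_gen[OF assms(1-3) assms(5)] .

end
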